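(* Let $D$ be an integral domain, $\mathfrak{m}$ a maximal $w$-ideal of $D$, and $M$ a torsion-free $D$-module which is a $w$-module. Then the following are equivalent: (1) $M$ is an $\mathfrak{m}$-SM-module; (2) $M_{\mathfrak{m}}$ is a Noetherian $D_{\mathfrak{m}}$-module and for every nonzero finitely generated $D$-submodule $L$ of $M$ there exists $s\in D\setminus\mathfrak{m}$ such that $(L_w)_{\mathfrak{m}}\cap M=L_w:s$.
   Context: Let $K$ be the quotient field of $D$; $I_v=(I^{-1})^{-1}$ with $I^{-1}=\{a\in K\mid aI\subseteq D\}$; $\mathrm{GV}(D)$ is the set of finitely generated ideals $J$ with $J_v=D$. For a torsion-free module $N$, $N_w=\{x\in N\otimes K\mid xJ\subseteq N\text{ for some }J\in\mathrm{GV}(D)\}$; $N$ is a $w$-module if $N_w=N$; a $w$-ideal is an ideal that is a $w$-module, and a maximal $w$-ideal is a proper $w$-ideal maximal among proper $w$-ideals. A submodule $N$ of $M$ is $S$-$w$-finite if there exist $s\in S$ and a finitely generated submodule $F$ of $M$ with $Ns\subseteq F_w\subseteq N_w$; a $w$-module $M$ is an $S$-SM-module if every $w$-submodule (submodule $L$ with $L_w=L$) is $S$-$w$-finite. $M$ is an $\mathfrak{m}$-SM-module if it is an $S$-SM-module for $S=D\setminus\mathfrak{m}$. For $r\in D$ and a submodule $L'$, $L':r=\{x\in M\mid xr\in L'\}$. The intersection is taken in $M_{\mathfrak{m}}$ with $M$ identified with its image. *)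

theory Defs
  imports Main "HOL.Vector_Spaces" "HOL-Computational_Algebra.Fraction_Field"
begin

(* D is the type 'a :: idom, K = 'a fract its quotient field.
   A torsion-free D-module is represented (up to isomorphism) as a D-submodule M
   of a K-vector space V (type 'v, scalar multiplication scale); then N \<otimes> K
   is identified with the K-span of N inside V. *)

definition emb :: "'a::idom \<Rightarrow> 'a fract" where
  "emb d = Fract d 1"

definition fracD :: "'a::idom fract set" where
  "fracD = range emb"

definition finv :: "'a::idom fract set \<Rightarrow> 'a fract set" where
  "finv I = {a. \<forall>x\<in>I. a * x \<in> fracD}"

definition vclos :: "'a::idom fract set \<Rightarrow> 'a fract set" where
  "vclos I = finv (finv I)"

definition is_ideal :: "'a::idom set \<Rightarrow> bool" where
  "is_ideal I \<longleftrightarrow> 0 \<in> I \<and> (\<forall>x\<in>I. \<forall>y\<in>I. x + y \<in> I) \<and> (\<forall>r. \<forall>x\<in>I. r * x \<in> I)"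

definition fg_ideal :: "'a::idom set \<Rightarrow> bool" where
  "fg_ideal J \<longleftrightarrow> (\<exists>F. finite F \<and> J = {\<Sum>f\<in>F. r f * f | r. True})"

definition GV :: "'a::idom set set" where
  "GV = {J. fg_ideal J \<and> vclos (emb ` J) = fracD}"

definition wcl :: "('a::idom fract \<Rightarrow> 'v::ab_group_add \<Rightarrow> 'v) \<Rightarrow> 'v set \<Rightarrow> 'v set" where
  "wcl scale N = {x \<in> module.span scale N. \<exists>J\<in>GV. \<forall>j\<in>J. scale (emb j) x \<in> N}"

definition dsubmod :: "('a::idom fract \<Rightarrow> 'v::ab_group_add \<Rightarrow> 'v) \<Rightarrow> 'v set \<Rightarrow> bool" where
  "dsubmod scale N \<longleftrightarrow> 0 \<in> N \<and> (\<forall>x\<in>N. \<forall>y\<in>N. x + y \<in> N)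
     \<and> (\<forall>d. \<forall>x\<in>N. scale (emb d) x \<in> N)"

definition w_ideal :: "'a::idom set \<Rightarrow> bool" where
  "w_ideal I \<longleftrightarrow> is_ideal I \<and> wcl (*) (emb ` I) = emb ` I"

definition max_w_ideal :: "'a::idom set \<Rightarrow> bool" where
  "max_w_ideal m \<longleftrightarrow> w_ideal m \<and> m \<noteq> UNIV \<and>
     (\<forall>I. w_ideal I \<and> I \<noteq> UNIV \<and> m \<subseteq> I \<longrightarrow> I = m)"

definition Dspan :: "('a::idom fract \<Rightarrow> 'v::ab_group_add \<Rightarrow> 'v) \<Rightarrow> 'v set \<Rightarrow> 'v set" where
  "Dspan scale G = {\<Sum>g\<in>G. scale (emb (r g)) g | r. True}"

definition fg_dsub :: "('a::idom fract \<Rightarrow> 'v::ab_group_add \<Rightarrow> 'v) \<Rightarrow> 'v set \<Rightarrow> 'v set \<Rightarrow> bool" where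
  "fg_dsub scale M F \<longleftrightarrow> (\<exists>G. finite G \<and> G \<subseteq> M \<and> F = Dspan scale G)"

definition S_w_finite :: "('a::idom fract \<Rightarrow> 'v::ab_group_add \<Rightarrow> 'v) \<Rightarrow> 'a set \<Rightarrow> 'v set \<Rightarrow> 'v set \<Rightarrow> bool" where
  "S_w_finite scale S M N \<longleftrightarrow> (\<exists>s\<in>S. \<exists>F. fg_dsub scale M F \<and>
      scale (emb s) ` N \<subseteq> wcl scale F \<and> wcl scale F \<subseteq> wcl scale N)"

definition S_SM :: "('a::idom fract \<Rightarrow> 'v::ab_group_add \<Rightarrow> 'v) \<Rightarrow> 'a set \<Rightarrow> 'v set \<Rightarrow> bool" where
  "S_SM scale S M \<longleftrightarrow> dsubmod scale M \<and> wcl scale M = M \<and>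
     (\<forall>L. dsubmod scale L \<and> L \<subseteq> M \<and> wcl scale L = L \<longrightarrow> S_w_finite scale S M L)"

definition m_SM :: "('a::idom fract \<Rightarrow> 'v::ab_group_add \<Rightarrow> 'v) \<Rightarrow> 'a set \<Rightarrow> 'v set \<Rightarrow> bool" where
  "m_SM scale m M \<longleftrightarrow> S_SM scale (- m) M"

definition locD :: "'a::idom set \<Rightarrow> 'a fract set" where
  "locD m = {Fract a s | a s. s \<notin> m}"

definition locM :: "('a::idom fract \<Rightarrow> 'v::ab_group_add \<Rightarrow> 'v) \<Rightarrow> 'a set \<Rightarrow> 'v set \<Rightarrow> 'v set" where
  "locM scale m N = {scale (Fract 1 s) x | x s. x \<in> N \<and> s \<notin> m}"

definition rsubmod :: "('a::idom fract \<Rightarrow> 'v::ab_group_add \<Rightarrow> 'v) \<Rightarrow> 'a fract set \<Rightarrow> 'v set \<Rightarrow> bool" where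
  "rsubmod scale R N \<longleftrightarrow> 0 \<in> N \<and> (\<forall>x\<in>N. \<forall>y\<in>N. x + y \<in> N) \<and> (\<forall>r\<in>R. \<forall>x\<in>N. scale r x \<in> N)"

definition noetherian_over :: "('a::idom fract \<Rightarrow> 'v::ab_group_add \<Rightarrow> 'v) \<Rightarrow> 'a fract set \<Rightarrow> 'v set \<Rightarrow> bool" where
  "noetherian_over scale R P \<longleftrightarrow> rsubmod scale R P \<and>
     (\<forall>N. N \<subseteq> P \<and> rsubmod scale R N \<longrightarrow>
        (\<exists>G. finite G \<and> G \<subseteq> N \<and> N = {\<Sum>g\<in>G. scale (r g) g | r. \<forall>g\<in>G. r g \<in> R}))"

definition colon :: "('a::idom fract \<Rightarrow> 'v::ab_group_add \<Rightarrow> 'v) \<Rightarrow> 'v set \<Rightarrow> 'v set \<Rightarrow> 'a \<Rightarrow> 'v set" where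
  "colon scale M L' s = {x \<in> M. scale (emb s) x \<in> L'}"

end

theory Submission
  imports Defs
begin

lemma emb_add[simp]: "emb (a + b) = emb a + emb b" by (simp add: emb_def)
lemma emb_mult[simp]: "emb (a * b) = emb a * emb b" by (simp add: emb_def)
lemma emb_0[simp]: "emb 0 = 0" by (simp add: emb_def Zero_fract_def)
lemma emb_1[simp]: "emb 1 = 1" by (simp add: emb_def One_fract_def)
lemma emb_minus[simp]: "emb (- a) = - emb a" by (simp add: emb_def)
lemma emb_inj[simp]: "emb a = emb b \<longleftrightarrow> a = b" by (simp add: emb_def eq_fract)
lemma emb_eq_0[simp]: "emb a = 0 \<longleftrightarrow> a = 0" using emb_inj[of a 0] by simp
lemma fracD_iff: "x \<in> fracD \<longleftrightarrow> (\<exists>d. x = emb d)" by (auto simp: fracD_def)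
lemma Fract_1_emb: "s \<noteq> 0 \<Longrightarrow> Fract 1 s * emb s = 1"
  by (simp add: emb_def One_fract_def eq_fract)
lemma Fract_1_mult: "Fract 1 s * Fract 1 t = Fract 1 (s * t)" by simp
lemma Fract_emb: "Fract a s = emb a * Fract 1 s" by (simp add: emb_def)

lemma fracD_add: "x \<in> fracD \<Longrightarrow> y \<in> fracD \<Longrightarrow> x + y \<in> fracD"
  by (auto simp: fracD_iff intro: exI[of _ "_ + _"])
lemma fracD_mult: "x \<in> fracD \<Longrightarrow> y \<in> fracD \<Longrightarrow> x * y \<in> fracD"
  by (auto simp: fracD_iff intro: exI[of _ "_ * _"])
lemma fracD_emb[simp]: "emb d \<in> fracD" by (auto simp: fracD_iff)

lemma finv_anti: "X \<subseteq> Y \<Longrightarrow> finv Y \<subseteq> finv X" by (auto simp: finv_def)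
lemma finv_finv_sup: "X \<subseteq> finv (finv X)" by (auto simp: finv_def mult.commute)
lemma finv3: "finv (finv (finv X)) = finv X"
  by (meson finv_anti finv_finv_sup subset_antisym)
lemma finv_fracD: "finv fracD = fracD"
proof
  show "finv fracD \<subseteq> fracD" unfolding finv_def
    using fracD_emb[of 1] by force
  show "fracD \<subseteq> finv fracD" by (auto simp: finv_def fracD_mult)
qed

lemma GV_finv: assumes "J \<in> GV" shows "finv (emb ` J) = fracD"
proof -
  have "vclos (emb ` J) = fracD" using assms by (simp add: GV_def)
  then have "finv (finv (finv (emb ` J))) = finv fracD" by (simp add: vclos_def)
  then show ?thesis by (simp add: finv3 finv_fracD)
qed

lemma fg_ideal_UNIV: "fg_ideal (UNIV :: 'a::idom set)"
  unfolding fg_ideal_def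
  by (rule exI[of _ "{1}"]) auto

lemma UNIV_GV: "UNIV \<in> GV"
proof -
  have e: "emb ` UNIV = fracD" by (simp add: fracD_def)
  have "vclos (emb ` UNIV) = fracD" unfolding vclos_def e finv_fracD finv_fracD ..
  then show ?thesis unfolding GV_def using fg_ideal_UNIV by simp
qed

lemma zero_GV_field: assumes "{0::'a::idom} \<in> GV" shows "fracD = (UNIV :: 'a fract set)"
proof -
  have "finv (emb ` {0::'a}) = fracD" by (rule GV_finv[OF assms])
  moreover have "finv (emb ` {0::'a}) = UNIV" by (auto simp: finv_def fracD_iff intro: exI[of _ 0])
  ultimately show ?thesis by simp
qed

lemma fg_ideal_gen: 
  fixes a :: "'a::idom"
  assumes "J = {\<Sum>f\<in>F. r f * f | r. True}" "a \<in> F" "finite F" shows "a \<in> J"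
proof -
  have "(\<Sum>f\<in>F. (if f = a then 1 else 0) * f) = (\<Sum>f\<in>F. if f = a then f else 0)"
    by (rule sum.cong) auto
  also have "\<dots> = a" using assms by simp
  finally have "a = (\<Sum>f\<in>F. (if f = a then 1 else 0) * f)" by simp
  then show ?thesis unfolding assms(1)
    by (intro CollectI exI[where x="\<lambda>f. if f = a then 1 else 0"]) simp
qed

lemma ideal_sum: "is_ideal I \<Longrightarrow> (\<And>x. x \<in> A \<Longrightarrow> f x \<in> I) \<Longrightarrow> sum f A \<in> I"
  by (induct A rule: infinite_finite_induct) (auto simp: is_ideal_def)

lemma emb_sum: "emb (sum g A) = (\<Sum>x\<in>A. emb (g x))"
  by (induct A rule: infinite_finite_induct) auto

lemma fracD_sum: "(\<And>x. x \<in> A \<Longrightarrow> f x \<in> fracD) \<Longrightarrow> sum f A \<in> fracD"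
proof (induct A rule: infinite_finite_induct)
  case (infinite A) then show ?case using fracD_emb[of 0] by simp
next
  case empty then show ?case using fracD_emb[of 0] by simp
next
  case (insert x F) then show ?case by (simp add: fracD_add)
qed

lemma finv_of_gen:
  assumes "J = {\<Sum>f\<in>F. r f * f | r. True}" "\<forall>f\<in>F. c * emb f \<in> fracD"
  shows "c \<in> finv (emb ` J)"
  unfolding finv_def
proof safe
  fix x assume "x \<in> J"
  then obtain r where x: "x = (\<Sum>f\<in>F. r f * f)" using assms(1) by auto
  have "c * emb x = (\<Sum>f\<in>F. emb (r f) * (c * emb f))"
    unfolding x emb_sum by (simp add: sum_distrib_left algebra_simps)
  also have "\<dots> \<in> fracD" using assms(2) by (intro fracD_sum) (simp add: fracD_mult)
  finally show "c * emb x \<in> fracD" .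
qed

lemma GV_mul:
  fixes I :: "'a::idom set"
  assumes "J1 \<in> GV" "J2 \<in> GV" "is_ideal I" "\<forall>a\<in>J1. \<forall>b\<in>J2. a * b \<in> I"
  shows "\<exists>J\<in>GV. J \<subseteq> I"
proof -
  obtain F1 where F1: "finite F1" "J1 = {\<Sum>f\<in>F1. r f * f | r. True}"
    using assms(1) by (auto simp: GV_def fg_ideal_def)
  obtain F2 where F2: "finite F2" "J2 = {\<Sum>f\<in>F2. r f * f | r. True}"
    using assms(2) by (auto simp: GV_def fg_ideal_def)
  define P where "P = (\<lambda>(a,b). a * b) ` (F1 \<times> F2)"
  define J where "J = {\<Sum>f\<in>P. r f * f | r. True}"
  have Pfin: "finite P" using F1 F2 by (simp add: P_def)
  have fgJ: "fg_ideal J" unfolding fg_ideal_def J_def using Pfin by blast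
  have PI: "p \<in> I" if "p \<in> P" for p
  proof -
    obtain a b where ab: "a \<in> F1" "b \<in> F2" "p = a * b" using \<open>p \<in> P\<close> by (auto simp: P_def)
    have "a \<in> J1" using fg_ideal_gen[OF F1(2) ab(1) F1(1)] .
    moreover have "b \<in> J2" using fg_ideal_gen[OF F2(2) ab(2) F2(1)] .
    ultimately show ?thesis using assms(4) ab(3) by blast
  qed
  have JI: "J \<subseteq> I"
  proof
    fix x assume "x \<in> J"
    then obtain r where x: "x = (\<Sum>f\<in>P. r f * f)" by (auto simp: J_def)
    show "x \<in> I" unfolding x using assms(3) PI
      by (intro ideal_sum) (auto simp: is_ideal_def)
  qed
  have "finv (emb ` J) \<subseteq> fracD"
  proof
    fix c assume c: "c \<in> finv (emb ` J)"
    have cab: "c * emb (a * b) \<in> fracD" if "a \<in> F1" "b \<in> F2" for a b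
    proof -
      have "a * b \<in> P" using that by (force simp: P_def)
      then have "a * b \<in> J" using fg_ideal_gen[OF J_def _ Pfin] by blast
      then show ?thesis using c by (auto simp: finv_def)
    qed
    have "c * emb a \<in> fracD" if "a \<in> F1" for a
    proof -
      have "c * emb a \<in> finv (emb ` J2)"
        using cab[OF that] by (intro finv_of_gen[OF F2(2)]) (auto simp: mult.assoc)
      then show ?thesis using GV_finv[OF assms(2)] by simp
    qed
    then have "c \<in> finv (emb ` J1)" by (intro finv_of_gen[OF F1(2)]) auto
    then show "c \<in> fracD" using GV_finv[OF assms(1)] by simp
  qed
  moreover have "fracD \<subseteq> finv (emb ` J)"
    by (auto simp: finv_def fracD_iff simp flip: emb_mult)
  ultimately have "finv (emb ` J) = fracD" by blast
  then have "J \<in> GV" using fgJ by (simp add: GV_def vclos_def finv_fracD)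
  then show ?thesis using JI by blast
qed

locale fvs = vector_space scale for scale :: "'a::idom fract \<Rightarrow> 'v::ab_group_add \<Rightarrow> 'v"
begin

lemma scale_comm: "scale a (scale b x) = scale b (scale a x)"
  by (simp add: mult.commute)

lemma dsub_0: "dsubmod scale N \<Longrightarrow> 0 \<in> N" by (simp add: dsubmod_def)
lemma dsub_add: "dsubmod scale N \<Longrightarrow> x \<in> N \<Longrightarrow> y \<in> N \<Longrightarrow> x + y \<in> N" by (simp add: dsubmod_def)
lemma dsub_scale: "dsubmod scale N \<Longrightarrow> x \<in> N \<Longrightarrow> scale (emb d) x \<in> N" by (simp add: dsubmod_def)

lemma dsub_sum: "dsubmod scale N \<Longrightarrow> (\<And>x. x \<in> A \<Longrightarrow> f x \<in> N) \<Longrightarrow> sum f A \<in> N"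
  by (induct A rule: infinite_finite_induct) (auto simp: dsub_0 dsub_add)

lemma dsub_ideal: "dsubmod scale N \<Longrightarrow> is_ideal {d. \<forall>b\<in>B. scale (emb (d * b)) x \<in> N}"
  unfolding is_ideal_def
proof (intro conjI ballI allI CollectI)
  fix b assume "dsubmod scale N" "b \<in> B"
  then show "scale (emb (0 * b)) x \<in> N" by (simp add: dsub_0)
next
  fix u v b assume N: "dsubmod scale N" and u: "u \<in> {d. \<forall>b\<in>B. scale (emb (d * b)) x \<in> N}"
    and v: "v \<in> {d. \<forall>b\<in>B. scale (emb (d * b)) x \<in> N}" and b: "b \<in> B"
  have "scale (emb ((u + v) * b)) x = scale (emb (u * b)) x + scale (emb (v * b)) x"
    by (simp only: distrib_right emb_add scale_left_distrib)
  then show "scale (emb ((u + v) * b)) x \<in> N" using u v b N by (simp add: dsub_add)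
next
  fix r u b assume N: "dsubmod scale N" and u: "u \<in> {d. \<forall>b\<in>B. scale (emb (d * b)) x \<in> N}"
    and b: "b \<in> B"
  have eq: "scale (emb (r * u * b)) x = scale (emb r) (scale (emb (u * b)) x)"
    by (simp only: mult.assoc emb_mult scale_scale)
  have "scale (emb (u * b)) x \<in> N" using u b by blast
  then show "scale (emb (r * u * b)) x \<in> N" unfolding eq by (rule dsub_scale[OF N])
qed

lemma dsub_ideal1: "dsubmod scale N \<Longrightarrow> is_ideal {d. scale (emb d) x \<in> N}"
  using dsub_ideal[of N "{1}" x] by simp

lemma Dspan_dsubmod: "dsubmod scale (Dspan scale G)"
  unfolding dsubmod_def Dspan_def
proof (intro conjI ballI allI)
  show "0 \<in> {\<Sum>g\<in>G. scale (emb (r g)) g |r. True}"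
    by (intro CollectI exI[where x="\<lambda>_. 0"]) simp
next
  fix x y assume "x \<in> {\<Sum>g\<in>G. scale (emb (r g)) g |r. True}" "y \<in> {\<Sum>g\<in>G. scale (emb (r g)) g |r. True}"
  then obtain r r' where "x = (\<Sum>g\<in>G. scale (emb (r g)) g)" "y = (\<Sum>g\<in>G. scale (emb (r' g)) g)" by auto
  then have "x + y = (\<Sum>g\<in>G. scale (emb (r g + r' g)) g)"
    by (simp add: sum.distrib scale_left_distrib)
  then show "x + y \<in> {\<Sum>g\<in>G. scale (emb (r g)) g |r. True}"
    by (intro CollectI exI[where x="\<lambda>g. r g + r' g"]) simp
next
  fix d x assume "x \<in> {\<Sum>g\<in>G. scale (emb (r g)) g |r. True}"
  then obtain r where "x = (\<Sum>g\<in>G. scale (emb (r g)) g)" by auto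
  then have "scale (emb d) x = (\<Sum>g\<in>G. scale (emb (d * r g)) g)"
    by (simp add: scale_sum_right)
  then show "scale (emb d) x \<in> {\<Sum>g\<in>G. scale (emb (r g)) g |r. True}"
    by (intro CollectI exI[where x="\<lambda>g. d * r g"]) simp
qed

lemma Dspan_gen: assumes "finite G" "g \<in> G" shows "g \<in> Dspan scale G"
proof -
  have "(\<Sum>h\<in>G. scale (emb (if h = g then 1 else 0)) h) = (\<Sum>h\<in>G. if h = g then h else 0)"
    by (rule sum.cong) auto
  also have "\<dots> = g" using assms by simp
  finally show ?thesis unfolding Dspan_def
    by (intro CollectI exI[where x="\<lambda>h. if h = g then 1 else 0"]) simp
qed

lemma Dspan_sub: assumes "G \<subseteq> N" "dsubmod scale N" shows "Dspan scale G \<subseteq> N"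
  using assms by (auto simp: Dspan_def intro!: dsub_sum dsub_scale)

lemma wclI: "x \<in> span N \<Longrightarrow> J \<in> GV \<Longrightarrow> (\<And>j. j \<in> J \<Longrightarrow> scale (emb j) x \<in> N) \<Longrightarrow> x \<in> wcl scale N"
  unfolding wcl_def by (intro CollectI conjI bexI[of _ J] ballI) auto

lemma wclE: assumes "x \<in> wcl scale N"
  obtains J where "x \<in> span N" "J \<in> GV" "\<And>j. j \<in> J \<Longrightarrow> scale (emb j) x \<in> N"
proof -
  have "x \<in> span N \<and> (\<exists>J\<in>GV. \<forall>j\<in>J. scale (emb j) x \<in> N)" using assms unfolding wcl_def by simp
  then show ?thesis using that by (elim conjE bexE) auto
qed

lemma wcl_mono: assumes "A \<subseteq> B" shows "wcl scale A \<subseteq> wcl scale B"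
proof
  fix x assume "x \<in> wcl scale A"
  then obtain J where x: "x \<in> span A" "J \<in> GV" "\<And>j. j \<in> J \<Longrightarrow> scale (emb j) x \<in> A" by (rule wclE) blast
  show "x \<in> wcl scale B"
  proof (rule wclI[OF _ x(2)])
    show "x \<in> span B" using x(1) span_mono[OF assms] by (rule subsetD[rotated])
    fix j assume "j \<in> J" then show "scale (emb j) x \<in> B" using x(3) assms by blast
  qed
qed

lemma wcl_span: "wcl scale N \<subseteq> span N"
  by (auto elim: wclE)

lemma wcl_sup: assumes "dsubmod scale N" shows "N \<subseteq> wcl scale N"
proof
  fix x assume "x \<in> N"
  show "x \<in> wcl scale N"
  proof (rule wclI[OF _ UNIV_GV])
    show "x \<in> span N" using \<open>x \<in> N\<close> by (rule span_base)
    fix j show "scale (emb j) x \<in> N" using \<open>x \<in> N\<close> by (rule dsub_scale[OF assms])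
  qed
qed

lemma wcl_dsubmod: assumes N: "dsubmod scale N" shows "dsubmod scale (wcl scale N)"
  unfolding dsubmod_def
proof (intro conjI ballI allI)
  show "0 \<in> wcl scale N" using wcl_sup[OF N] dsub_0[OF N] by blast
next
  fix x y assume "x \<in> wcl scale N" "y \<in> wcl scale N"
  then obtain J1 J2 where x: "x \<in> span N" "J1 \<in> GV" "\<And>j. j \<in> J1 \<Longrightarrow> scale (emb j) x \<in> N"
    and y: "y \<in> span N" "J2 \<in> GV" "\<And>j. j \<in> J2 \<Longrightarrow> scale (emb j) y \<in> N"
    by (elim wclE) blast
  have "\<forall>a\<in>J1. \<forall>b\<in>J2. a * b \<in> {d. scale (emb d) (x + y) \<in> N}"
  proof (intro ballI)
    fix a b assume "a \<in> J1" "b \<in> J2"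
    have "scale (emb (a * b)) (x + y) = scale (emb b) (scale (emb a) x) + scale (emb a) (scale (emb b) y)"
      by (simp add: scale_right_distrib mult.commute)
    also have "\<dots> \<in> N" using dsub_add[OF N dsub_scale[OF N x(3)[OF \<open>a \<in> J1\<close>]] dsub_scale[OF N y(3)[OF \<open>b \<in> J2\<close>]]] .
    finally show "a * b \<in> {d. scale (emb d) (x + y) \<in> N}" by simp
  qed
  then obtain J where "J \<in> GV" "J \<subseteq> {d. scale (emb d) (x + y) \<in> N}"
    using GV_mul[OF x(2) y(2) dsub_ideal1[OF N]] by blast
  then show "x + y \<in> wcl scale N" using x(1) y(1) by (intro wclI[of _ _ J]) (auto intro: span_add)
next
  fix d x assume "x \<in> wcl scale N"
  then obtain J where x: "x \<in> span N" "J \<in> GV" "\<And>j. j \<in> J \<Longrightarrow> scale (emb j) x \<in> N"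
    by (elim wclE) blast
  show "scale (emb d) x \<in> wcl scale N"
  proof (rule wclI[OF _ x(2)])
    show "scale (emb d) x \<in> span N" using x(1) by (rule span_scale)
    fix j assume "j \<in> J"
    show "scale (emb j) (scale (emb d) x) \<in> N"
      unfolding scale_comm[of "emb j"] by (rule dsub_scale[OF N x(3)[OF \<open>j \<in> J\<close>]])
  qed
qed

lemma wcl_idem: assumes N: "dsubmod scale N" shows "wcl scale (wcl scale N) = wcl scale N"
proof
  show "wcl scale N \<subseteq> wcl scale (wcl scale N)" by (rule wcl_sup[OF wcl_dsubmod[OF N]])
  show "wcl scale (wcl scale N) \<subseteq> wcl scale N"
  proof
    fix x assume "x \<in> wcl scale (wcl scale N)"
    then obtain J where x: "x \<in> span (wcl scale N)" "J \<in> GV" "\<And>j. j \<in> J \<Longrightarrow> scale (emb j) x \<in> wcl scale N"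
      by (elim wclE) blast
    have xs: "x \<in> span N" using x(1) span_mono[OF wcl_span[of N]] span_span by blast
    obtain F where F: "finite F" "J = {\<Sum>f\<in>F. r f * f | r. True}"
      using x(2) by (auto simp: GV_def fg_ideal_def)
    have claim: "finite S \<Longrightarrow> S \<subseteq> F \<Longrightarrow> \<exists>Q\<in>GV. \<forall>a\<in>S. \<forall>q\<in>Q. scale (emb (q * a)) x \<in> N" for S
    proof (induct S rule: finite_induct)
      case empty then show ?case using UNIV_GV by blast
    next
      case (insert a S)
      then obtain Q where Q: "Q \<in> GV" "\<forall>b\<in>S. \<forall>q\<in>Q. scale (emb (q * b)) x \<in> N" by blast
      have "a \<in> F" using insert by blast
      have "a \<in> J" using fg_ideal_gen[OF F(2) \<open>a \<in> F\<close> F(1)] .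
      then have "scale (emb a) x \<in> wcl scale N" by (rule x(3))
      then obtain Ja where Ja: "Ja \<in> GV" "\<And>c. c \<in> Ja \<Longrightarrow> scale (emb c) (scale (emb a) x) \<in> N"
        by (elim wclE) blast
      have prod: "\<forall>q\<in>Q. \<forall>c\<in>Ja. q * c \<in> {d. \<forall>b\<in>insert a S. scale (emb (d * b)) x \<in> N}"
      proof (intro ballI CollectI)
        fix q c b assume qc: "q \<in> Q" "c \<in> Ja" and b: "b \<in> insert a S"
        show "scale (emb (q * c * b)) x \<in> N"
        proof (cases "b = a")
          case True
          have eq: "scale (emb (q * c * b)) x = scale (emb q) (scale (emb c) (scale (emb a) x))"
            using True by (simp add: algebra_simps)
          show ?thesis unfolding eq by (rule dsub_scale[OF N Ja(2)[OF qc(2)]])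
        next
          case False
          then have "b \<in> S" using b by simp
          have eq: "scale (emb (q * c * b)) x = scale (emb c) (scale (emb (q * b)) x)"
            by (simp add: algebra_simps)
          have "scale (emb (q * b)) x \<in> N" using Q(2) \<open>b \<in> S\<close> qc(1) by blast
          then show ?thesis unfolding eq by (rule dsub_scale[OF N])
        qed
      qed
      obtain Q' where Q': "Q' \<in> GV" "Q' \<subseteq> {d. \<forall>b\<in>insert a S. scale (emb (d * b)) x \<in> N}"
        using GV_mul[OF Q(1) Ja(1) dsub_ideal[OF N] prod] by (elim bexE)
      show ?case by (rule bexI[OF _ Q'(1)]) (use Q'(2) in blast)
    qed
    obtain Q where Q: "Q \<in> GV" "\<forall>a\<in>F. \<forall>q\<in>Q. scale (emb (q * a)) x \<in> N"
      using claim[OF F(1) subset_refl] by (elim bexE) 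
    have prod: "\<forall>q\<in>Q. \<forall>j\<in>J. q * j \<in> {d. scale (emb d) x \<in> N}"
    proof (intro ballI CollectI)
      fix q j assume "q \<in> Q" "j \<in> J"
      then obtain r where j: "j = (\<Sum>f\<in>F. r f * f)" using F(2) by auto
      have "scale (emb (q * j)) x = (\<Sum>f\<in>F. scale (emb (r f)) (scale (emb (q * f)) x))"
        unfolding j emb_sum sum_distrib_left scale_sum_left
        by (rule sum.cong) (simp_all add: mult.commute mult.left_commute)
      also have "\<dots> \<in> N"
      proof (rule dsub_sum[OF N])
        fix f assume "f \<in> F"
        then have "scale (emb (q * f)) x \<in> N" using Q(2) \<open>q \<in> Q\<close> by blast
        then show "scale (emb (r f)) (scale (emb (q * f)) x) \<in> N" by (rule dsub_scale[OF N])
      qed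
      finally show "scale (emb (q * j)) x \<in> N" .
    qed
    obtain J' where "J' \<in> GV" "J' \<subseteq> {d. scale (emb d) x \<in> N}"
      using GV_mul[OF Q(1) x(2) dsub_ideal1[OF N] prod] by (elim bexE)
    then show "x \<in> wcl scale N" using xs by (intro wclI[of _ _ J']) auto
  qed
qed

end

lemma fvs_times: "fvs ((*) :: 'a::idom fract \<Rightarrow> 'a fract \<Rightarrow> 'a fract)"
  unfolding fvs_def by unfold_locales (simp_all add: distrib_left distrib_right)

lemma field_span:
  fixes scale :: "'a::idom fract \<Rightarrow> 'v::ab_group_add \<Rightarrow> 'v"
  assumes F: "fvs scale" and "fracD = (UNIV :: 'a fract set)" "dsubmod scale N" shows "module.span scale N = N"
proof -
  interpret fvs scale by (fact F)
  have assms: "fracD = (UNIV :: 'a fract set)" "dsubmod scale N" by fact+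
  have "subspace N"
  proof (rule subspaceI)
    fix c :: "'a fract" and x assume "x \<in> N"
    have "c \<in> fracD" using assms(1) by simp
    then obtain d where "c = emb d" unfolding fracD_iff by blast
    then show "scale c x \<in> N" using dsub_scale[OF assms(2) \<open>x \<in> N\<close>, of d] by simp
  next
    show "0 \<in> N" by (rule dsub_0[OF assms(2)])
  next
    fix x y assume "x \<in> N" "y \<in> N"
    then show "x + y \<in> N" by (rule dsub_add[OF assms(2)])
  qed
  then show ?thesis by (rule span_eq_iff[THEN iffD2])
qed

lemma mw_ideal: "max_w_ideal m \<Longrightarrow> is_ideal m" by (simp add: max_w_ideal_def w_ideal_def)

lemma mw_one: assumes "max_w_ideal (m :: 'a::idom set)" shows "1 \<notin> m"
proof
  assume "1 \<in> m"
  then have "r * 1 \<in> m" for r using mw_ideal[OF assms] unfolding is_ideal_def by blast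
  then have "m = UNIV" by auto
  then show False using assms by (simp add: max_w_ideal_def)
qed

lemma mw_zero: "max_w_ideal m \<Longrightarrow> 0 \<in> m" using mw_ideal unfolding is_ideal_def by blast

lemma mw_nz: "max_w_ideal m \<Longrightarrow> s \<notin> m \<Longrightarrow> s \<noteq> 0" using mw_zero by blast

lemma wcl_frac: "wcl (*) (emb ` (X :: 'a::idom set)) \<subseteq> fracD"
proof
  interpret T: fvs "(*) :: 'a fract \<Rightarrow> 'a fract \<Rightarrow> 'a fract" by (rule fvs_times)
  fix x assume "x \<in> wcl (*) (emb ` X)"
  then obtain J where J: "J \<in> GV" "\<And>j. j \<in> J \<Longrightarrow> emb j * x \<in> emb ` X" by (elim T.wclE) blast
  have "x \<in> finv (emb ` J)" unfolding finv_def
  proof (intro CollectI ballI)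
    fix y assume "y \<in> emb ` J"
    then obtain j where "j \<in> J" "y = emb j" by blast
    then have "x * y \<in> emb ` X" using J(2) by (simp add: mult.commute)
    then show "x * y \<in> fracD" by (auto simp: fracD_iff)
  qed
  then show "x \<in> fracD" using GV_finv[OF J(1)] by simp
qed

lemma fg_zero: "fg_ideal J \<Longrightarrow> (0::'a::idom) \<in> J"
proof -
  assume "fg_ideal J"
  then obtain F where "J = {\<Sum>f\<in>F. r f * f | r. True}" by (auto simp: fg_ideal_def)
  then show ?thesis by (auto intro!: exI[where x="\<lambda>_. 0"])
qed

lemma GV_sub_m:
  fixes m :: "'a::idom set"
  assumes mw: "max_w_ideal m" and J: "J \<in> GV" "J \<subseteq> m" shows "J = {0}"
proof (rule ccontr)
  interpret T: fvs "(*) :: 'a fract \<Rightarrow> 'a fract \<Rightarrow> 'a fract" by (rule fvs_times)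
  assume "J \<noteq> {0}"
  moreover have "0 \<in> J" using J(1) unfolding GV_def by (auto intro: fg_zero)
  ultimately obtain j where j: "j \<in> J" "j \<noteq> 0" by blast
  have "emb j \<in> T.span (emb ` J)" using j(1) by (intro T.span_base) simp
  then have "inverse (emb j) * emb j \<in> T.span (emb ` J)" by (rule T.span_scale)
  then have sp: "1 \<in> T.span (emb ` J)" using j(2) by simp
  have "1 \<in> wcl (*) (emb ` J)"
  proof (rule T.wclI[OF sp J(1)])
    fix i assume "i \<in> J" then show "emb i * 1 \<in> emb ` J" by simp
  qed
  moreover have "wcl (*) (emb ` J) \<subseteq> wcl (*) (emb ` m)" using J(2) by (intro T.wcl_mono) blast
  ultimately have "1 \<in> wcl (*) (emb ` m)" by blast
  also have "wcl (*) (emb ` m) = emb ` m" using mw by (simp add: max_w_ideal_def w_ideal_def)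
  finally have "emb 1 \<in> emb ` m" by simp
  then obtain y where "y \<in> m" "emb 1 = emb y" by blast
  from \<open>emb 1 = emb y\<close> have "1 = y" by (simp only: emb_inj)
  then have "1 \<in> m" using \<open>y \<in> m\<close> by simp
  then show False using mw_one[OF mw] by simp
qed

lemma GV_out:
  fixes m :: "'a::idom set"
  assumes mw: "max_w_ideal m" and J: "J \<in> GV"
  shows "(\<exists>j\<in>J. j \<notin> m) \<or> fracD = (UNIV :: 'a fract set)"
proof (cases "J \<subseteq> m")
  case True
  then have "J = {0}" using GV_sub_m[OF mw J] by simp
  then have "{0::'a} \<in> GV" using J by simp
  then have "fracD = (UNIV :: 'a fract set)" by (rule zero_GV_field)
  then show ?thesis by simp
qed auto

lemma field_unit: assumes "fracD = (UNIV :: 'a::idom fract set)" "(a::'a) \<noteq> 0" shows "\<exists>e. a * e = 1"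
proof -
  have "Fract 1 a \<in> fracD" using assms(1) by simp
  then obtain e where "Fract 1 a = emb e" by (auto simp: fracD_iff)
  then have "Fract 1 a = Fract e 1" by (simp add: emb_def)
  then have "1 = e * a" using assms(2) by (simp add: eq_fract)
  then show ?thesis by (metis mult.commute)
qed

lemma mw_cover:
  fixes m :: "'a::idom set"
  assumes mw: "max_w_ideal m" and a: "a \<notin> m"
  shows "\<exists>J\<in>GV. \<forall>j\<in>J. \<exists>x r. x \<in> m \<and> j = x + a * r"
proof -
  interpret T: fvs "(*) :: 'a fract \<Rightarrow> 'a fract \<Rightarrow> 'a fract" by (rule fvs_times)
  have im: "is_ideal m" by (rule mw_ideal[OF mw])
  define X where "X = {x + a * r | x r. x \<in> m}"
  have dX: "dsubmod (*) (emb ` X)" unfolding dsubmod_def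
  proof (intro conjI ballI allI)
    have "(0::'a) = 0 + a * 0" by simp
    then have "(0::'a) \<in> X" unfolding X_def using mw_zero[OF mw] by blast
    then have "emb 0 \<in> emb ` X" by (rule imageI)
    then show "0 \<in> emb ` X" by simp
  next
    fix u v assume "u \<in> emb ` X" "v \<in> emb ` X"
    then obtain x r y r' where "x \<in> m" "y \<in> m" "u = emb (x + a * r)" "v = emb (y + a * r')"
      unfolding X_def by blast
    then have e: "u + v = emb ((x + y) + a * (r + r'))" by (simp add: algebra_simps)
    have "x + y \<in> m" using im \<open>x \<in> m\<close> \<open>y \<in> m\<close> by (simp add: is_ideal_def)
    then have "(x + y) + a * (r + r') \<in> X" unfolding X_def by blast
    then show "u + v \<in> emb ` X" unfolding e by (rule imageI)
  next
    fix d u assume "u \<in> emb ` X"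
    then obtain x r where "x \<in> m" and ue: "u = emb (x + a * r)" unfolding X_def by blast
    have de: "d * (x + a * r) = d * x + a * (d * r)" by (simp add: algebra_simps)
    have e: "emb d * u = emb (d * x + a * (d * r))" unfolding ue emb_mult[symmetric] de ..
    have "d * x \<in> m" using im \<open>x \<in> m\<close> by (simp add: is_ideal_def)
    then have "d * x + a * (d * r) \<in> X" unfolding X_def by blast
    then show "emb d * u \<in> emb ` X" unfolding e by (rule imageI)
  qed
  define W where "W = wcl (*) (emb ` X)"
  have dW: "dsubmod (*) W" unfolding W_def by (rule T.wcl_dsubmod[OF dX])
  have Wf: "W \<subseteq> fracD" unfolding W_def by (rule wcl_frac)
  define I where "I = {d. emb d \<in> W}"
  have eI: "emb ` I = W"
  proof
    show "emb ` I \<subseteq> W" unfolding I_def by blast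
    show "W \<subseteq> emb ` I"
    proof
      fix w assume "w \<in> W"
      then have "w \<in> fracD" using Wf by blast
      then obtain d where "w = emb d" unfolding fracD_iff by blast
      then show "w \<in> emb ` I" using \<open>w \<in> W\<close> unfolding I_def by blast
    qed
  qed
  have iI: "is_ideal I" unfolding is_ideal_def I_def
  proof (intro conjI ballI allI CollectI)
    show "emb 0 \<in> W" using T.dsub_0[OF dW] by simp
  next
    fix x y assume "x \<in> {d. emb d \<in> W}" "y \<in> {d. emb d \<in> W}"
    then show "emb (x + y) \<in> W" using T.dsub_add[OF dW] by simp
  next
    fix r x assume "x \<in> {d. emb d \<in> W}"
    then show "emb (r * x) \<in> W" using T.dsub_scale[OF dW, of "emb x" r] by simp
  qed
  have "wcl (*) (emb ` I) = emb ` I" unfolding eI W_def by (rule T.wcl_idem[OF dX])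
  then have wI: "w_ideal I" unfolding w_ideal_def using iI by blast
  have mI: "m \<subseteq> I"
  proof
    fix x assume "x \<in> m"
    then have "x \<in> X" unfolding X_def by (intro CollectI exI[of _ x] exI[of _ 0]) simp
    then have "emb x \<in> W" unfolding W_def using T.wcl_sup[OF dX] by blast
    then show "x \<in> I" by (simp add: I_def)
  qed
  have "a \<in> X" unfolding X_def using mw_zero[OF mw] by (intro CollectI exI[of _ 0] exI[of _ 1]) simp
  then have "emb a \<in> W" unfolding W_def using T.wcl_sup[OF dX] by blast
  then have aI: "a \<in> I" by (simp add: I_def)
  have "I = UNIV"
  proof (rule ccontr)
    assume "I \<noteq> UNIV"
    then have "I = m" using mw wI mI by (simp add: max_w_ideal_def)
    then show False using a aI by simp
  qed
  then have "1 \<in> I" by simp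
  then have "emb 1 \<in> W" unfolding I_def by simp
  then have "1 \<in> W" by simp
  then obtain J where J: "J \<in> GV" "\<And>j. j \<in> J \<Longrightarrow> emb j * 1 \<in> emb ` X"
    unfolding W_def by (elim T.wclE) blast
  have "\<forall>j\<in>J. \<exists>x r. x \<in> m \<and> j = x + a * r"
  proof
    fix j assume "j \<in> J"
    then have "emb j \<in> emb ` X" using J(2) by simp
    then obtain x where "x \<in> X" "emb j = emb x" by blast
    then have "j \<in> X" by (simp only: emb_inj)
    then show "\<exists>x r. x \<in> m \<and> j = x + a * r" unfolding X_def by blast
  qed
  then show ?thesis using J(1) by blast
qed

lemma mw_prime:
  fixes m :: "'a::idom set"
  assumes mw: "max_w_ideal m" and a: "a \<notin> m" and b: "b \<notin> m"
  shows "a * b \<notin> m"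
proof
  assume ab: "a * b \<in> m"
  have im: "is_ideal m" by (rule mw_ideal[OF mw])
  obtain Ja where Ja: "Ja \<in> GV" "\<forall>j\<in>Ja. \<exists>x r. x \<in> m \<and> j = x + a * r" using mw_cover[OF mw a] by blast
  obtain Jb where Jb: "Jb \<in> GV" "\<forall>j\<in>Jb. \<exists>x r. x \<in> m \<and> j = x + b * r" using mw_cover[OF mw b] by blast
  have prod: "\<forall>c\<in>Ja. \<forall>d\<in>Jb. c * d \<in> m"
  proof (intro ballI)
    fix c d assume "c \<in> Ja" "d \<in> Jb"
    then obtain x r y r' where xy: "x \<in> m" "y \<in> m" "c = x + a * r" "d = y + b * r'" using Ja Jb by blast
    have e: "c * d = x * d + (r * a) * y + (r * r') * (a * b)" using xy(3,4) by (simp add: algebra_simps)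
    have "d * x \<in> m" using im xy(1) unfolding is_ideal_def by blast
    then have 1: "x * d \<in> m" by (simp add: mult.commute)
    have 2: "(r * a) * y \<in> m" using im xy(2) unfolding is_ideal_def by blast
    have 3: "(r * r') * (a * b) \<in> m" using im ab unfolding is_ideal_def by blast
    have "x * d + (r * a) * y \<in> m" using im 1 2 unfolding is_ideal_def by blast
    then show "c * d \<in> m" unfolding e using im 3 unfolding is_ideal_def by blast
  qed
  obtain J where "J \<in> GV" "J \<subseteq> m" using GV_mul[OF Ja(1) Jb(1) im prod] by (elim bexE)
  then have "J = {0}" by (rule GV_sub_m[OF mw])
  then have F: "fracD = (UNIV :: 'a fract set)" using zero_GV_field \<open>J \<in> GV\<close> by blast
  obtain e where "a * e = 1" using field_unit[OF F mw_nz[OF mw a]] by blast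
  then have "b = e * (a * b)" by (metis mult.assoc mult.commute mult_1_left)
  also have "\<dots> \<in> m" using im ab unfolding is_ideal_def by blast
  finally show False using b by simp
qed

locale fvsm = fvs scale for scale :: "'a::idom fract \<Rightarrow> 'v::ab_group_add \<Rightarrow> 'v" +
  fixes m :: "'a set"
  assumes mw: "max_w_ideal m"
begin

lemma nz: "s \<notin> m \<Longrightarrow> s \<noteq> 0" by (rule mw_nz[OF mw])
lemma prime: "s \<notin> m \<Longrightarrow> t \<notin> m \<Longrightarrow> s * t \<notin> m" by (rule mw_prime[OF mw])
lemma one_notin: "1 \<notin> m" by (rule mw_one[OF mw])

lemma emb_Fract_1: "s \<noteq> 0 \<Longrightarrow> emb s * Fract 1 s = 1"
  using Fract_1_emb[of s] by (simp add: mult.commute)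

lemma inv1: assumes "s \<noteq> 0" shows "scale (emb s) (scale (Fract 1 s) x) = x"
proof -
  have "scale (emb s) (scale (Fract 1 s) x) = scale (emb s * Fract 1 s) x" by (rule scale_scale)
  also have "\<dots> = x" using emb_Fract_1[OF assms] by simp
  finally show ?thesis .
qed

lemma inv2: assumes "s \<noteq> 0" shows "scale (Fract 1 s) (scale (emb s) x) = x"
proof -
  have "scale (Fract 1 s) (scale (emb s) x) = scale (Fract 1 s * emb s) x" by (rule scale_scale)
  also have "\<dots> = x" using Fract_1_emb[OF assms] by simp
  finally show ?thesis .
qed

lemma Fract_cancel: "s \<noteq> 0 \<Longrightarrow> t \<noteq> 0 \<Longrightarrow> Fract 1 (s * t) * emb t = Fract 1 s"
  by (simp add: emb_def eq_fract mult.commute)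

lemma locM_iff: "y \<in> locM scale m N \<longleftrightarrow> (\<exists>x s. y = scale (Fract 1 s) x \<and> x \<in> N \<and> s \<notin> m)"
  unfolding locM_def by blast

lemma locM_sup: "N \<subseteq> locM scale m N"
proof
  fix x assume "x \<in> N"
  have "x = scale (Fract 1 1) x" by (simp flip: One_fract_def)
  then show "x \<in> locM scale m N" unfolding locM_iff using \<open>x \<in> N\<close> one_notin by blast
qed

lemma locM_mono: "A \<subseteq> B \<Longrightarrow> locM scale m A \<subseteq> locM scale m B"
  unfolding locM_def by blast

lemma locM_add: assumes N: "dsubmod scale N" and y: "y1 \<in> locM scale m N" "y2 \<in> locM scale m N"
  shows "y1 + y2 \<in> locM scale m N"
proof -
  obtain x s z t where xs: "y1 = scale (Fract 1 s) x" "x \<in> N" "s \<notin> m"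
    and zt: "y2 = scale (Fract 1 t) z" "z \<in> N" "t \<notin> m"
    using y unfolding locM_iff by blast
  have s0: "s \<noteq> 0" and t0: "t \<noteq> 0" using nz xs(3) zt(3) by auto
  have "scale (Fract 1 (s * t)) (scale (emb t) x + scale (emb s) z)
      = scale (Fract 1 (s * t) * emb t) x + scale (Fract 1 (t * s) * emb s) z"
    by (simp only: scale_right_distrib scale_scale mult.commute[of s t])
  also have "\<dots> = y1 + y2" using Fract_cancel[OF s0 t0] Fract_cancel[OF t0 s0] xs(1) zt(1) by simp
  finally have e: "y1 + y2 = scale (Fract 1 (s * t)) (scale (emb t) x + scale (emb s) z)" ..
  have "scale (emb t) x + scale (emb s) z \<in> N" using N xs(2) zt(2) by (simp add: dsub_add dsub_scale)
  then show ?thesis unfolding e locM_iff using prime[OF xs(3) zt(3)] by blast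
qed

lemma locD_iff: "r \<in> locD m \<longleftrightarrow> (\<exists>a s. r = Fract a s \<and> s \<notin> m)"
  unfolding locD_def by blast

lemma emb_locD: "emb d \<in> locD m"
  unfolding locD_iff emb_def using one_notin by blast

lemma Fract1_locD: "s \<notin> m \<Longrightarrow> Fract 1 s \<in> locD m"
  unfolding locD_iff by blast

lemma locM_scale: assumes N: "dsubmod scale N" and r: "r \<in> locD m" and y: "y \<in> locM scale m N"
  shows "scale r y \<in> locM scale m N"
proof -
  obtain a u where au: "r = Fract a u" "u \<notin> m" using r unfolding locD_iff by blast
  obtain x s where xs: "y = scale (Fract 1 s) x" "x \<in> N" "s \<notin> m" using y unfolding locM_iff by blast
  have "scale r y = scale (Fract a u * Fract 1 s) x" unfolding au xs by (rule scale_scale)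
  also have "Fract a u * Fract 1 s = Fract 1 (u * s) * emb a" by (simp add: emb_def mult.commute)
  also have "scale (Fract 1 (u * s) * emb a) x = scale (Fract 1 (u * s)) (scale (emb a) x)" by simp
  finally have e: "scale r y = scale (Fract 1 (u * s)) (scale (emb a) x)" .
  have "scale (emb a) x \<in> N" using N xs(2) by (rule dsub_scale)
  then show ?thesis unfolding e locM_iff using prime[OF au(2) xs(3)] by blast
qed

lemma locM_0: "dsubmod scale N \<Longrightarrow> 0 \<in> locM scale m N"
  using locM_sup dsub_0 by blast

lemma locM_rsub: assumes N: "dsubmod scale N" shows "rsubmod scale (locD m) (locM scale m N)"
  unfolding rsubmod_def using locM_0[OF N] locM_add[OF N] locM_scale[OF N] by blast

lemma locM_dsub: assumes N: "dsubmod scale N" shows "dsubmod scale (locM scale m N)"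
  unfolding dsubmod_def using locM_0[OF N] locM_add[OF N] locM_scale[OF N emb_locD] by blast

lemma rsub_sum: "rsubmod scale R N \<Longrightarrow> (\<And>x. x \<in> A \<Longrightarrow> f x \<in> N) \<Longrightarrow> sum f A \<in> N"
  by (induct A rule: infinite_finite_induct) (auto simp: rsubmod_def)

lemma clear_locM:
  assumes "finite G" "G \<subseteq> locM scale m W" "dsubmod scale W"
  shows "\<exists>t. t \<notin> m \<and> (\<forall>g\<in>G. scale (emb t) g \<in> W)"
  using assms(1,2)
proof (induct G rule: finite_induct)
  case empty then show ?case using one_notin by blast
next
  case (insert g G)
  then obtain t where t: "t \<notin> m" "\<forall>g\<in>G. scale (emb t) g \<in> W" by blast
  have "g \<in> locM scale m W" using insert(4) by simp
  then obtain w s where ws: "g = scale (Fract 1 s) w" "w \<in> W" "s \<notin> m" unfolding locM_iff by blast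
  have e1: "scale (emb (t * s)) g = scale (emb t) (scale (emb s) g)"
    by (simp only: emb_mult scale_scale)
  have "scale (emb (t * s)) g = scale (emb t) (scale (emb s) (scale (Fract 1 s) w))" using e1 unfolding ws(1) .
  also have "\<dots> = scale (emb t) w" by (simp only: inv1[OF nz[OF ws(3)]])
  finally have "scale (emb (t * s)) g = scale (emb t) w" .
  then have g1: "scale (emb (t * s)) g \<in> W" using dsub_scale[OF assms(3) ws(2), of t] by simp
  have "scale (emb (t * s)) g' \<in> W" if "g' \<in> G" for g'
  proof -
    have e2: "scale (emb (t * s)) g' = scale (emb s) (scale (emb t) g')"
      by (simp only: emb_mult scale_scale mult.commute)
    show ?thesis unfolding e2 by (rule dsub_scale[OF assms(3)]) (use t(2) that in blast)
  qed
  then have "\<forall>g'\<in>insert g G. scale (emb (t * s)) g' \<in> W" using g1 by simp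
  then show ?case using prime[OF t(1) ws(3)] by blast
qed

lemma clear_locD:
  assumes "finite G" "\<forall>g\<in>G. r g \<in> locD m"
  shows "\<exists>u. u \<notin> m \<and> (\<forall>g\<in>G. \<exists>d. r g * emb u = emb d)"
  using assms
proof (induct G rule: finite_induct)
  case empty then show ?case using one_notin by blast
next
  case (insert g G)
  then obtain u where u: "u \<notin> m" "\<forall>g\<in>G. \<exists>d. r g * emb u = emb d" by blast
  have "r g \<in> locD m" using insert(4) by simp
  then obtain a s where as: "r g = Fract a s" "s \<notin> m" unfolding locD_iff by blast
  have s0: "s \<noteq> 0" using nz[OF as(2)] .
  have "r g * emb (u * s) = Fract (a * (u * s)) (s * 1)" unfolding as(1) by (simp only: emb_def mult_fract)
  also have "\<dots> = Fract (a * u) 1" using s0 by (simp add: eq_fract algebra_simps)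
  also have "\<dots> = emb (a * u)" by (simp only: emb_def)
  finally have "r g * emb (u * s) = emb (a * u)" .
  then have g1: "\<exists>d. r g * emb (u * s) = emb d" by (rule exI)
  have "\<exists>d. r g' * emb (u * s) = emb d" if "g' \<in> G" for g'
  proof -
    have "\<exists>d. r g' * emb u = emb d" using u(2) that by (rule bspec)
    then obtain d where d: "r g' * emb u = emb d" by (elim exE)
    have "r g' * emb (u * s) = (r g' * emb u) * emb s" by (simp only: emb_mult mult.assoc)
    also have "\<dots> = emb (d * s)" unfolding d emb_mult ..
    finally show ?thesis by (rule exI)
  qed
  then have "\<forall>g'\<in>insert g G. \<exists>d. r g' * emb (u * s) = emb d" using g1 by simp
  then show ?case using prime[OF u(1) as(2)] by blast
qed

lemma field_locD: assumes "fracD = (UNIV :: 'a fract set)" shows "locD m = UNIV"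
proof -
  have "k \<in> locD m" for k :: "'a fract"
  proof -
    have "k \<in> fracD" using assms by simp
    then obtain d where "k = emb d" unfolding fracD_iff by blast
    then show ?thesis using emb_locD by simp
  qed
  then show ?thesis by blast
qed

lemma GVo: "J \<in> GV \<Longrightarrow> (\<exists>j\<in>J. j \<notin> m) \<or> fracD = (UNIV :: 'a fract set)"
  by (rule GV_out[OF mw])

end

context fvsm
begin

lemma fvs_self: "fvs scale" by (simp add: fvs_def vector_space_axioms)

lemma Dspan_span: "Dspan scale G \<subseteq> span G"
proof
  fix x assume "x \<in> Dspan scale G"
  then obtain c where x: "x = (\<Sum>g\<in>G. scale (emb (c g)) g)" unfolding Dspan_def by blast
  show "x \<in> span G" unfolding x by (intro span_sum span_scale span_base)
qed

lemma y_rep: assumes "t \<notin> m" "s' \<notin> m"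
  shows "scale (Fract 1 t) x = scale (Fract 1 (t * s')) (scale (emb s') x)"
proof -
  have e: "Fract 1 (t * s') * emb s' = Fract 1 t" by (rule Fract_cancel[OF nz[OF assms(1)] nz[OF assms(2)]])
  show ?thesis by (simp only: scale_scale e)
qed

lemma back_locM: assumes W: "dsubmod scale W" and j: "j \<notin> m" and x: "scale (emb j) x \<in> locM scale m W"
  shows "x \<in> locM scale m W"
proof -
  have "scale (Fract 1 j) (scale (emb j) x) \<in> locM scale m W" by (rule locM_scale[OF W Fract1_locD[OF j] x])
  then show ?thesis unfolding inv2[OF nz[OF j]] .
qed

lemma wclosed:
  assumes M: "wcl scale M = M" and P: "dsubmod scale P" "P \<subseteq> M"
    and bk: "\<And>x j. x \<in> M \<Longrightarrow> j \<notin> m \<Longrightarrow> scale (emb j) x \<in> P \<Longrightarrow> x \<in> P"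
  shows "wcl scale P = P"
proof
  show "P \<subseteq> wcl scale P" by (rule wcl_sup[OF P(1)])
  show "wcl scale P \<subseteq> P"
  proof
    fix x assume x: "x \<in> wcl scale P"
    have "x \<in> wcl scale M" using x wcl_mono[OF P(2)] by blast
    then have xM: "x \<in> M" using M by simp
    obtain J where J: "x \<in> span P" "J \<in> GV" "\<And>j. j \<in> J \<Longrightarrow> scale (emb j) x \<in> P"
      using x by (elim wclE) blast
    from GVo[OF J(2)] show "x \<in> P"
    proof
      assume "\<exists>j\<in>J. j \<notin> m"
      then obtain j where "j \<in> J" "j \<notin> m" by blast
      then show "x \<in> P" using bk[OF xM \<open>j \<notin> m\<close> J(3)] by blast
    next
      assume "fracD = (UNIV :: 'a fract set)"
      then have sp: "span P = P" by (rule field_span[OF fvs_self _ P(1)])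
      show "x \<in> P" using J(1) unfolding sp .
    qed
  qed
qed


lemma noeth:
  assumes M: "dsubmod scale M" "wcl scale M = M" and SM: "S_SM scale (- m) M"
  shows "noetherian_over scale (locD m) (locM scale m M)"
  unfolding noetherian_over_def
proof (intro conjI allI impI)
  show "rsubmod scale (locD m) (locM scale m M)" by (rule locM_rsub[OF M(1)])
  fix N assume "N \<subseteq> locM scale m M \<and> rsubmod scale (locD m) N"
  then have NM: "N \<subseteq> locM scale m M" and rN: "rsubmod scale (locD m) N" by auto
  have rN0: "0 \<in> N" using rN by (simp add: rsubmod_def)
  have rNadd: "x + y \<in> N" if "x \<in> N" "y \<in> N" for x y using rN that by (simp add: rsubmod_def)
  have rNsc: "scale r x \<in> N" if "r \<in> locD m" "x \<in> N" for r x using rN that by (simp add: rsubmod_def)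
  define N' where "N' = N \<inter> M"
  have dN': "dsubmod scale N'" unfolding dsubmod_def N'_def
    using rN0 rNadd rNsc[OF emb_locD] M(1) by (auto simp: dsub_0 dsub_add dsub_scale)
  have wN': "wcl scale N' = N'"
  proof (rule wclosed[OF M(2) dN'])
    show "N' \<subseteq> M" unfolding N'_def by blast
    fix x j assume xj: "x \<in> M" "j \<notin> m" "scale (emb j) x \<in> N'"
    have "scale (Fract 1 j) (scale (emb j) x) \<in> N" using xj(3) unfolding N'_def
      by (intro rNsc[OF Fract1_locD[OF xj(2)]]) blast
    then have "x \<in> N" unfolding inv2[OF nz[OF xj(2)]] .
    then show "x \<in> N'" using xj(1) unfolding N'_def by blast
  qed
  have "S_w_finite scale (- m) M N'"
    using SM dN' wN' unfolding S_SM_def N'_def by blast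
  then obtain s F where s: "s \<notin> m" and F: "fg_dsub scale M F" "scale (emb s) ` N' \<subseteq> wcl scale F"
    "wcl scale F \<subseteq> wcl scale N'" unfolding S_w_finite_def by blast
  obtain G where G: "finite G" "G \<subseteq> M" "F = Dspan scale G" using F(1) unfolding fg_dsub_def by blast
  have dF: "dsubmod scale F" unfolding G(3) by (rule Dspan_dsubmod)
  have GN: "G \<subseteq> N"
  proof
    fix g assume "g \<in> G"
    then have "g \<in> F" unfolding G(3) by (rule Dspan_gen[OF G(1)])
    then have "g \<in> wcl scale F" using wcl_sup[OF dF] by blast
    then have "g \<in> N'" using F(3) wN' by blast
    then show "g \<in> N" unfolding N'_def by blast
  qed
  show "\<exists>G. finite G \<and> G \<subseteq> N \<and> N = {\<Sum>g\<in>G. scale (r g) g | r. \<forall>g\<in>G. r g \<in> locD m}"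
  proof (intro exI conjI)
    show "finite G" by (rule G(1))
    show "G \<subseteq> N" by (rule GN)
    show "N = {\<Sum>g\<in>G. scale (r g) g | r. \<forall>g\<in>G. r g \<in> locD m}"
    proof
      show "{\<Sum>g\<in>G. scale (r g) g | r. \<forall>g\<in>G. r g \<in> locD m} \<subseteq> N"
      proof
        fix y assume "y \<in> {\<Sum>g\<in>G. scale (r g) g | r. \<forall>g\<in>G. r g \<in> locD m}"
        then obtain r where y: "y = (\<Sum>g\<in>G. scale (r g) g)" "\<forall>g\<in>G. r g \<in> locD m" by blast
        show "y \<in> N" unfolding y(1)
        proof (rule rsub_sum[OF rN])
          fix g assume "g \<in> G"
          then show "scale (r g) g \<in> N" using y(2) GN by (intro rNsc) auto
        qed
      qed
      show "N \<subseteq> {\<Sum>g\<in>G. scale (r g) g | r. \<forall>g\<in>G. r g \<in> locD m}"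
      proof
        fix y assume yN: "y \<in> N"
        then have "y \<in> locM scale m M" using NM by blast
        then obtain x t where xt: "y = scale (Fract 1 t) x" "x \<in> M" "t \<notin> m" unfolding locM_iff by blast
        have "scale (emb t) y = x" unfolding xt(1) by (rule inv1[OF nz[OF xt(3)]])
        moreover have "scale (emb t) y \<in> N" by (rule rNsc[OF emb_locD yN])
        ultimately have "x \<in> N'" using xt(2) unfolding N'_def by simp
        then have "scale (emb s) x \<in> wcl scale F" using F(2) by blast
        then obtain J where J: "scale (emb s) x \<in> span F" "J \<in> GV"
          "\<And>j. j \<in> J \<Longrightarrow> scale (emb j) (scale (emb s) x) \<in> F" by (elim wclE) blast
        from GVo[OF J(2)]
        show "y \<in> {\<Sum>g\<in>G. scale (r g) g | r. \<forall>g\<in>G. r g \<in> locD m}"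
        proof
          assume "\<exists>j\<in>J. j \<notin> m"
          then obtain j where j: "j \<in> J" "j \<notin> m" by blast
          have "scale (emb j) (scale (emb s) x) \<in> F" by (rule J(3)[OF j(1)])
          then obtain c where c: "scale (emb j) (scale (emb s) x) = (\<Sum>g\<in>G. scale (emb (c g)) g)"
            unfolding G(3) Dspan_def by blast
          have js: "j * s \<notin> m" by (rule prime[OF j(2) s])
          define u where "u = t * (j * s)"
          have u: "u \<notin> m" unfolding u_def by (rule prime[OF xt(3) js])
          have y1: "y = scale (Fract 1 u) (scale (emb (j * s)) x)" unfolding xt(1) u_def by (rule y_rep[OF xt(3) js])
          have e1: "scale (emb (j * s)) x = (\<Sum>g\<in>G. scale (emb (c g)) g)" using c by (simp only: emb_mult scale_scale)
          have ye: "y = (\<Sum>g\<in>G. scale (Fract 1 u * emb (c g)) g)"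
            unfolding y1 e1 by (simp only: scale_sum_right scale_scale)
          have "\<forall>g\<in>G. Fract 1 u * emb (c g) \<in> locD m"
          proof
            fix g
            have "Fract 1 u * emb (c g) = Fract (c g) u" by (simp add: emb_def)
            then show "Fract 1 u * emb (c g) \<in> locD m" unfolding locD_iff using u by blast
          qed
          then show ?thesis using ye by (intro CollectI exI[where x="\<lambda>g. Fract 1 u * emb (c g)"]) simp
        next
          assume fd: "fracD = (UNIV :: 'a fract set)"
          have "F \<subseteq> span G" unfolding G(3) by (rule Dspan_span)
          then have "span F \<subseteq> span G" using span_mono span_span by blast
          then have sx: "scale (emb s) x \<in> span G" using J(1) by blast
          have "y = scale (Fract 1 (t * s)) (scale (emb s) x)" unfolding xt(1) by (rule y_rep[OF xt(3) s])
          also have "\<dots> \<in> span G" using sx by (rule span_scale)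
          finally have "y \<in> span G" .
          then obtain c where "y = (\<Sum>v\<in>G. scale (c v) v)" unfolding span_finite[OF G(1)] by blast
          moreover have "\<forall>g\<in>G. c g \<in> locD m" using field_locD[OF fd] by simp
          ultimately show ?thesis by (intro CollectI exI[where x=c]) simp
        qed
      qed
    qed
  qed
qed


lemma colon_part:
  assumes M: "dsubmod scale M" "wcl scale M = M" and SM: "S_SM scale (- m) M"
    and L: "fg_dsub scale M L"
  shows "\<exists>s. s \<notin> m \<and> locM scale m (wcl scale L) \<inter> M = colon scale M (wcl scale L) s"
proof -
  obtain G0 where G0: "finite G0" "G0 \<subseteq> M" "L = Dspan scale G0" using L unfolding fg_dsub_def by blast
  have dL: "dsubmod scale L" unfolding G0(3) by (rule Dspan_dsubmod)
  have LM: "L \<subseteq> M" unfolding G0(3) by (rule Dspan_sub[OF G0(2) M(1)])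
  define W where "W = wcl scale L"
  have dW: "dsubmod scale W" unfolding W_def by (rule wcl_dsubmod[OF dL])
  have WM: "W \<subseteq> M" unfolding W_def using wcl_mono[OF LM] M(2) by simp
  have wW: "wcl scale W = W" unfolding W_def by (rule wcl_idem[OF dL])
  define P where "P = locM scale m W \<inter> M"
  have dLW: "dsubmod scale (locM scale m W)" by (rule locM_dsub[OF dW])
  have PM: "P \<subseteq> M" unfolding P_def by blast
  have dP: "dsubmod scale P" unfolding dsubmod_def
  proof (intro conjI ballI allI)
    show "0 \<in> P" unfolding P_def using dsub_0[OF dLW] dsub_0[OF M(1)] by blast
    fix x y assume "x \<in> P" "y \<in> P"
    then show "x + y \<in> P" unfolding P_def using dsub_add[OF dLW, of x y] dsub_add[OF M(1), of x y] by blast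
  next
    fix d x assume "x \<in> P"
    then show "scale (emb d) x \<in> P" unfolding P_def using dsub_scale[OF dLW, of x d] dsub_scale[OF M(1), of x d] by blast
  qed
  have wP: "wcl scale P = P"
  proof (rule wclosed[OF M(2) dP PM])
    fix x j assume xj: "x \<in> M" "j \<notin> m" "scale (emb j) x \<in> P"
    have "scale (emb j) x \<in> locM scale m W" using xj(3) unfolding P_def by blast
    then have "x \<in> locM scale m W" by (rule back_locM[OF dW xj(2)])
    then show "x \<in> P" using xj(1) unfolding P_def by blast
  qed
  have "\<forall>L. dsubmod scale L \<and> L \<subseteq> M \<and> wcl scale L = L \<longrightarrow> S_w_finite scale (- m) M L"
    using SM unfolding S_SM_def by blast
  then have "S_w_finite scale (- m) M P" using dP wP PM by blast
  then obtain s F where s: "s \<notin> m" and F: "fg_dsub scale M F" "scale (emb s) ` P \<subseteq> wcl scale F"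
    "wcl scale F \<subseteq> wcl scale P" unfolding S_w_finite_def by blast
  obtain G where G: "finite G" "G \<subseteq> M" "F = Dspan scale G" using F(1) unfolding fg_dsub_def by blast
  have dF: "dsubmod scale F" unfolding G(3) by (rule Dspan_dsubmod)
  have GW: "G \<subseteq> locM scale m W"
  proof
    fix g assume "g \<in> G"
    then have "g \<in> F" unfolding G(3) by (rule Dspan_gen[OF G(1)])
    then have "g \<in> wcl scale F" using wcl_sup[OF dF] by blast
    then have "g \<in> P" using F(3) wP by blast
    then show "g \<in> locM scale m W" unfolding P_def by blast
  qed
  obtain t where t: "t \<notin> m" "\<forall>g\<in>G. scale (emb t) g \<in> W" using clear_locM[OF G(1) GW dW] by blast
  have tF: "scale (emb t) f \<in> W" if "f \<in> F" for f
  proof -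
    obtain c where c: "f = (\<Sum>g\<in>G. scale (emb (c g)) g)" using \<open>f \<in> F\<close> unfolding G(3) Dspan_def by blast
    have "scale (emb t) f = (\<Sum>g\<in>G. scale (emb (c g)) (scale (emb t) g))"
      unfolding c scale_sum_right by (rule sum.cong[OF refl]) (rule scale_comm)
    also have "\<dots> \<in> W"
    proof (rule dsub_sum[OF dW])
      fix g assume "g \<in> G"
      then have "scale (emb t) g \<in> W" using t(2) by blast
      then show "scale (emb (c g)) (scale (emb t) g) \<in> W" by (rule dsub_scale[OF dW])
    qed
    finally show ?thesis .
  qed
  have FW: "F \<subseteq> span W"
  proof
    fix f assume "f \<in> F"
    then have "scale (emb t) f \<in> span W" using tF span_base by blast
    then have "scale (Fract 1 t) (scale (emb t) f) \<in> span W" by (rule span_scale)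
    then show "f \<in> span W" unfolding inv2[OF nz[OF t(1)]] .
  qed
  have twF: "scale (emb t) x \<in> W" if xF: "x \<in> wcl scale F" for x
  proof -
    obtain J where J: "x \<in> span F" "J \<in> GV" "\<And>j. j \<in> J \<Longrightarrow> scale (emb j) x \<in> F"
      using xF by (elim wclE) blast
    have "span F \<subseteq> span W" using span_mono[OF FW] span_span by blast
    then have "x \<in> span W" using J(1) by blast
    then have sp: "scale (emb t) x \<in> span W" by (rule span_scale)
    have "scale (emb t) x \<in> wcl scale W"
    proof (rule wclI[OF sp J(2)])
      fix j assume "j \<in> J"
      have e: "scale (emb j) (scale (emb t) x) = scale (emb t) (scale (emb j) x)" by (rule scale_comm)
      show "scale (emb j) (scale (emb t) x) \<in> W" unfolding e by (rule tF[OF J(3)[OF \<open>j \<in> J\<close>]])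
    qed
    then show ?thesis using wW by simp
  qed
  have ts: "t * s \<notin> m" by (rule prime[OF t(1) s])
  have "P = colon scale M W (t * s)"
  proof
    show "P \<subseteq> colon scale M W (t * s)"
    proof
      fix x assume x: "x \<in> P"
      then have "scale (emb s) x \<in> wcl scale F" using F(2) by blast
      then have "scale (emb t) (scale (emb s) x) \<in> W" by (rule twF)
      moreover have "scale (emb (t * s)) x = scale (emb t) (scale (emb s) x)" by (simp only: emb_mult scale_scale)
      ultimately show "x \<in> colon scale M W (t * s)" using x unfolding colon_def P_def by simp
    qed
    show "colon scale M W (t * s) \<subseteq> P"
    proof
      fix x assume "x \<in> colon scale M W (t * s)"
      then have x: "x \<in> M" "scale (emb (t * s)) x \<in> W" unfolding colon_def by auto
      have "scale (Fract 1 (t * s)) (scale (emb (t * s)) x) \<in> locM scale m W"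
        unfolding locM_iff using x(2) ts by blast
      then have "x \<in> locM scale m W" unfolding inv2[OF nz[OF ts]] .
      then show "x \<in> P" using x(1) unfolding P_def by blast
    qed
  qed
  then show ?thesis using ts unfolding P_def W_def by blast
qed

lemma dir2:
  assumes M: "dsubmod scale M" "wcl scale M = M"
    and N: "noetherian_over scale (locD m) (locM scale m M)"
    and C: "\<forall>L. fg_dsub scale M L \<and> L \<noteq> {0} \<longrightarrow>
        (\<exists>s. s \<notin> m \<and> locM scale m (wcl scale L) \<inter> M = colon scale M (wcl scale L) s)"
  shows "S_SM scale (- m) M"
  unfolding S_SM_def
proof (intro conjI allI impI)
  show "dsubmod scale M" by (rule M(1))
  show "wcl scale M = M" by (rule M(2))
  fix L assume "dsubmod scale L \<and> L \<subseteq> M \<and> wcl scale L = L"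
  then have dL: "dsubmod scale L" and LM: "L \<subseteq> M" and wL: "wcl scale L = L" by auto
  show "S_w_finite scale (- m) M L"
  proof (cases "L = {0}")
    case True
    have fg: "fg_dsub scale M (Dspan scale {})" unfolding fg_dsub_def by blast
    have D0: "Dspan scale {} = {0}" unfolding Dspan_def by simp
    have "0 \<in> wcl scale {0}" using wcl_sup[OF Dspan_dsubmod[of "{}"]] unfolding D0 by blast
    then have "scale (emb 1) ` L \<subseteq> wcl scale (Dspan scale {})" unfolding True D0 by simp
    moreover have "wcl scale (Dspan scale {}) \<subseteq> wcl scale L" unfolding True D0 by simp
    ultimately show ?thesis unfolding S_w_finite_def using fg one_notin by blast
  next
    case False
    then obtain z where z: "z \<in> L" "z \<noteq> 0" using dsub_0[OF dL] by blast
    have LlM: "locM scale m L \<subseteq> locM scale m M" by (rule locM_mono[OF LM])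
    have rL: "rsubmod scale (locD m) (locM scale m L)" by (rule locM_rsub[OF dL])
    obtain G where G: "finite G" "G \<subseteq> locM scale m L"
      "locM scale m L = {\<Sum>g\<in>G. scale (r g) g | r. \<forall>g\<in>G. r g \<in> locD m}"
      using N LlM rL unfolding noetherian_over_def by blast
    obtain t where t: "t \<notin> m" "\<forall>g\<in>G. scale (emb t) g \<in> L" using clear_locM[OF G(1,2) dL] by blast
    define G' where "G' = insert z ((\<lambda>g. scale (emb t) g) ` G)"
    have G'L: "G' \<subseteq> L" unfolding G'_def using z(1) t(2) by blast
    have G'f: "finite G'" unfolding G'_def using G(1) by simp
    define F where "F = Dspan scale G'"
    have dF: "dsubmod scale F" unfolding F_def by (rule Dspan_dsubmod)
    have fgF: "fg_dsub scale M F" unfolding fg_dsub_def F_def using G'f G'L LM by blast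
    have zF: "z \<in> F" unfolding F_def by (rule Dspan_gen[OF G'f]) (simp add: G'_def)
    have "F \<noteq> {0}" using zF z(2) by blast
    then obtain s where s: "s \<notin> m" "locM scale m (wcl scale F) \<inter> M = colon scale M (wcl scale F) s"
      using C fgF by blast
    have FL: "F \<subseteq> L" unfolding F_def by (rule Dspan_sub[OF G'L dL])
    have wFL: "wcl scale F \<subseteq> wcl scale L" by (rule wcl_mono[OF FL])
    have "scale (emb s) ` L \<subseteq> wcl scale F"
    proof
      fix v assume "v \<in> scale (emb s) ` L"
      then obtain y where y: "y \<in> L" "v = scale (emb s) y" by blast
      have "y \<in> locM scale m L" using y(1) locM_sup by blast
      then obtain r where r: "y = (\<Sum>g\<in>G. scale (r g) g)" "\<forall>g\<in>G. r g \<in> locD m"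
        unfolding G(3) by blast
      obtain u where u: "u \<notin> m" "\<forall>g\<in>G. \<exists>d. r g * emb u = emb d" using clear_locD[OF G(1) r(2)] by blast
      obtain dd where dd: "\<forall>g\<in>G. r g * emb u = emb (dd g)" using bchoice[OF u(2)] by blast
      have "scale (emb (u * t)) y = (\<Sum>g\<in>G. scale (emb (dd g)) (scale (emb t) g))"
        unfolding r(1) scale_sum_right
      proof (rule sum.cong[OF refl])
        fix g assume "g \<in> G"
        have "emb (u * t) * r g = emb (dd g) * emb t"
          using dd \<open>g \<in> G\<close> by (simp add: mult_ac)
        then show "scale (emb (u * t)) (scale (r g) g) = scale (emb (dd g)) (scale (emb t) g)"
          by (simp only: scale_scale)
      qed
      also have "\<dots> \<in> F"
      proof (rule dsub_sum[OF dF])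
        fix g assume "g \<in> G"
        then have "scale (emb t) g \<in> G'" unfolding G'_def by (intro insertI2 imageI)
        then have "scale (emb t) g \<in> F" unfolding F_def by (rule Dspan_gen[OF G'f])
        then show "scale (emb (dd g)) (scale (emb t) g) \<in> F" by (rule dsub_scale[OF dF])
      qed
      finally have yF: "scale (emb (u * t)) y \<in> F" .
      have ut: "u * t \<notin> m" by (rule prime[OF u(1) t(1)])
      have "scale (Fract 1 (u * t)) (scale (emb (u * t)) y) \<in> locM scale m F"
        unfolding locM_iff using yF ut by blast
      then have "y \<in> locM scale m F" unfolding inv2[OF nz[OF ut]] .
      then have "y \<in> locM scale m (wcl scale F)" using locM_mono[OF wcl_sup[OF dF]] by blast
      then have "y \<in> colon scale M (wcl scale F) s" using s(2) y(1) LM by blast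
      then show "v \<in> wcl scale F" unfolding colon_def y(2) by blast
    qed
    then show ?thesis unfolding S_w_finite_def using fgF s(1) wFL wL by auto
  qed
qed

end

theorem proposition3p3:
  fixes scale :: "'a::idom fract \<Rightarrow> 'v::ab_group_add \<Rightarrow> 'v"
    and m :: "'a set" and M :: "'v set"
  assumes "vector_space scale"
    and "max_w_ideal m"
    and "dsubmod scale M"
    and "wcl scale M = M"
  shows "m_SM scale m M \<longleftrightarrow>
    (noetherian_over scale (locD m) (locM scale m M) \<and>
     (\<forall>L. fg_dsub scale M L \<and> L \<noteq> {0} \<longrightarrow>
        (\<exists>s. s \<notin> m \<and> locM scale m (wcl scale L) \<inter> M = colon scale M (wcl scale L) s)))"
proof -
  interpret fvsm scale m
    using assms(1,2) by (simp add: fvsm_def fvsm_axioms_def fvs_def)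
  show ?thesis unfolding m_SM_def
  proof
    assume SM: "S_SM scale (- m) M"
    show "noetherian_over scale (locD m) (locM scale m M) \<and>
     (\<forall>L. fg_dsub scale M L \<and> L \<noteq> {0} \<longrightarrow>
        (\<exists>s. s \<notin> m \<and> locM scale m (wcl scale L) \<inter> M = colon scale M (wcl scale L) s))"
    proof (intro conjI allI impI)
      show "noetherian_over scale (locD m) (locM scale m M)" by (rule noeth[OF assms(3,4) SM])
      fix L assume "fg_dsub scale M L \<and> L \<noteq> {0}"
      then have "fg_dsub scale M L" by simp
      then show "\<exists>s. s \<notin> m \<and> locM scale m (wcl scale L) \<inter> M = colon scale M (wcl scale L) s"
        by (rule colon_part[OF assms(3,4) SM])
    qed
  next
    assume H: "noetherian_over scale (locD m) (locM scale m M) \<and>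
     (\<forall>L. fg_dsub scale M L \<and> L \<noteq> {0} \<longrightarrow>
        (\<exists>s. s \<notin> m \<and> locM scale m (wcl scale L) \<inter> M = colon scale M (wcl scale L) s))"
    show "S_SM scale (- m) M" by (rule dir2[OF assms(3,4) conjunct1[OF H] conjunct2[OF H]])
  qed
qed

end
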